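(* For each positive integer $k$, the graph $K_{k+1,\lceil k^2/4+500k^{7/4}\rceil}$ cannot be $k$-page embedded.
   Context: A book with $k$ pages consists of a line (the spine) and $k$ half-planes (the pages) whose common boundary is the spine. A $k$-page embedding of a graph places all vertices on the spine and draws each edge inside a single page with no two edges crossing. *)

theory Defs
  imports Complex_Main
begin

text \<open>A k-page book embedding is described combinatorially: the vertices are placed on
the spine in the order given by an injective map spine : V -> nat, and every edge
is assigned a page in {0..<k}. Two edges drawn in the same page (a half-plane)
cross iff their endpoints interleave along the spine.\<close>

definition interleave :: "('a \<Rightarrow> nat) \<Rightarrow> 'a \<Rightarrow> 'a \<Rightarrow> 'a \<Rightarrow> 'a \<Rightarrow> bool" where
  "interleave spine u v x y \<longleftrightarrow> spine u < spine x \<and> spine x < spine v \<and> spine v < spine y"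

definition is_book_embedding ::
  "'a set \<Rightarrow> 'a set set \<Rightarrow> nat \<Rightarrow> ('a \<Rightarrow> nat) \<Rightarrow> ('a set \<Rightarrow> nat) \<Rightarrow> bool" where
  "is_book_embedding V E k spine page \<longleftrightarrow>
     inj_on spine V \<and>
     (\<forall>e\<in>E. page e < k) \<and>
     (\<forall>u v x y. {u, v} \<in> E \<longrightarrow> {x, y} \<in> E \<longrightarrow> page {u, v} = page {x, y}
         \<longrightarrow> \<not> interleave spine u v x y)"

definition k_page_embeddable :: "'a set \<Rightarrow> 'a set set \<Rightarrow> nat \<Rightarrow> bool" where
  "k_page_embeddable V E k \<longleftrightarrow> (\<exists>spine page. is_book_embedding V E k spine page)"

definition Kbip_V :: "nat \<Rightarrow> nat \<Rightarrow> (nat + nat) set" where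
  "Kbip_V m n = Inl ` {..<m} \<union> Inr ` {..<n}"

definition Kbip_E :: "nat \<Rightarrow> nat \<Rightarrow> (nat + nat) set set" where
  "Kbip_E m n = {{Inl i, Inr j} | i j. i < m \<and> j < n}"

end

theory Submission
  imports Defs "HOL-Library.Sublist"
begin

definition blk :: "nat \<Rightarrow> bool list" where
  "blk m = replicate m False @ [True]"

definition antip :: "nat \<Rightarrow> bool list \<Rightarrow> bool" where
  "antip N ys \<longleftrightarrow> length ys = 2*N \<and> (\<forall>i<N. ys!i \<noteq> ys!(i+N))"

definition Phi :: "nat list \<Rightarrow> nat \<Rightarrow> nat" where
  "Phi ms t = t + sum_list (take (Suc t) ms)"

lemma len_concat_blk: "length (concat (map blk ms)) = length ms + sum_list ms"
  by (induct ms) (auto simp: blk_def)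

lemma Phi_Cons0: "Phi (m#ms) 0 = m" by (simp add: Phi_def)
lemma Phi_ConsS: "Phi (m#ms) (Suc t) = Suc (m + Phi ms t)" by (simp add: Phi_def)

lemma nth_concat_blk:
  "p < length (concat (map blk ms)) \<Longrightarrow>
    (concat (map blk ms) ! p \<longleftrightarrow> (\<exists>t<length ms. p = Phi ms t))"
proof (induct ms arbitrary: p)
  case Nil then show ?case by simp
next
  case (Cons m ms)
  have eq: "concat (map blk (m#ms)) = replicate m False @ True # concat (map blk ms)"
    by (simp add: blk_def)
  show ?case
  proof (cases "p < m")
    case True
    then have "\<not> (\<exists>t<length (m#ms). p = Phi (m#ms) t)"
      by (auto simp: Phi_def less_Suc_eq_0_disj)
    moreover have "concat (map blk (m#ms)) ! p = False" using True
      by (simp only: eq nth_append) simp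
    ultimately show ?thesis by simp
  next
    case False
    show ?thesis
    proof (cases "p = m")
      case True
      have "concat (map blk (m#ms)) ! p = True" using True
        by (simp only: eq nth_append) simp
      moreover have "\<exists>t<length (m#ms). p = Phi (m#ms) t" using True
        by (intro exI[of _ 0]) (simp add: Phi_Cons0)
      ultimately show ?thesis by simp
    next
      case False2: False
      with False obtain p' where p': "p = Suc (m + p')" by (metis add_Suc_right less_imp_Suc_add linorder_neqE_nat not_less_eq)
      have pl: "p' < length (concat (map blk ms))" using Cons.prems p' by (simp add: len_concat_blk) (simp add: blk_def)
      have "concat (map blk (m#ms)) ! p = concat (map blk ms) ! p'"
        by (simp only: eq nth_append p') simp
      also have "\<dots> \<longleftrightarrow> (\<exists>t<length ms. p' = Phi ms t)" using Cons.hyps[OF pl] .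
      also have "\<dots> \<longleftrightarrow> (\<exists>t<length (m#ms). p = Phi (m#ms) t)"
      proof
        assume "\<exists>t<length ms. p' = Phi ms t"
        then obtain t where "t < length ms" "p' = Phi ms t" by blast
        then show "\<exists>t<length (m#ms). p = Phi (m#ms) t"
          by (intro exI[of _ "Suc t"]) (simp add: Phi_ConsS p')
      next
        assume "\<exists>t<length (m#ms). p = Phi (m#ms) t"
        then obtain t where t: "t < length (m#ms)" "p = Phi (m#ms) t" by blast
        show "\<exists>t<length ms. p' = Phi ms t"
        proof (cases t)
          case 0 then show ?thesis using t False2 by (simp add: Phi_Cons0)
        next
          case (Suc t') then show ?thesis using t p' by (auto simp: Phi_ConsS)
        qed
      qed
      finally show ?thesis .
    qed
  qed
qed

lemma sum_take_mono: "a \<le> b \<Longrightarrow> sum_list (take a (ms::nat list)) \<le> sum_list (take b ms)"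
proof -
  assume "a \<le> b"
  then have "take b ms = take a ms @ take (b - a) (drop a ms)"
    by (metis le_add_diff_inverse take_add)
  then show ?thesis by simp
qed

lemma Phi_strict: "t < t' \<Longrightarrow> Phi ms t < Phi ms t'"
  unfolding Phi_def using sum_take_mono[of "Suc t" "Suc t'" ms] by simp

lemma Phi_last: "length ms = N \<Longrightarrow> N \<ge> 1 \<Longrightarrow> Phi ms (N - 1) = N - 1 + sum_list ms"
  by (simp add: Phi_def)

lemma antip_crit:
  assumes len: "length ms = N" and sm: "sum_list ms = N"
    and crit: "\<And>t t'. t < N \<Longrightarrow> t' < N \<Longrightarrow> Phi ms t' \<noteq> Phi ms t + N"
  shows "antip N (concat (map blk ms))"
proof -
  define w where "w = concat (map blk ms)"
  have lw: "length w = 2*N" using len sm by (simp add: w_def len_concat_blk)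
  have Pb: "Phi ms t < 2*N" if "t < N" for t
  proof -
    have "t = N - 1 \<or> t < N - 1" using that by linarith
    then have "Phi ms t \<le> Phi ms (N - 1)" using Phi_strict[of t "N - 1" ms]
      by auto
    also have "\<dots> = N - 1 + N" using that len sm Phi_last[of ms N] by simp
    finally show ?thesis using that by simp
  qed
  define TP where "TP = {p. p < 2*N \<and> w!p}"
  have TPe: "TP = Phi ms ` {..<N}"
  proof
    show "TP \<subseteq> Phi ms ` {..<N}"
      using nth_concat_blk[of _ ms] lw len by (auto simp: TP_def w_def)
    show "Phi ms ` {..<N} \<subseteq> TP"
    proof
      fix p assume "p \<in> Phi ms ` {..<N}"
      then obtain t where t: "t < N" "p = Phi ms t" by auto
      then have "p < 2*N" using Pb by auto
      then show "p \<in> TP" using nth_concat_blk[of p ms] lw len t by (auto simp: TP_def w_def)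
    qed
  qed
  have injP: "inj_on (Phi ms) {..<N}"
    by (rule inj_onI) (metis Phi_strict linorder_neqE_nat less_irrefl)
  have cTP: "card TP = N" using TPe injP by (simp add: card_image)
  define A where "A = {p. p < N \<and> w!p}"
  define B where "B = {p. p < N \<and> w!(p+N)}"
  have TPAB: "TP = A \<union> (\<lambda>p. p + N) ` B"
  proof (rule set_eqI)
    fix x show "x \<in> TP \<longleftrightarrow> x \<in> A \<union> (\<lambda>p. p + N) ` B"
    proof
      assume "x \<in> TP"
      then show "x \<in> A \<union> (\<lambda>p. p + N) ` B"
        unfolding TP_def A_def B_def
        by (cases "x < N") (auto intro!: image_eqI[of _ _ "x - N"])
    qed (auto simp: TP_def A_def B_def)
  qed
  have disj: "A \<inter> (\<lambda>p. p + N) ` B = {}" by (auto simp: A_def B_def)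
  have fA: "finite A" "finite B" by (auto simp: A_def B_def)
  have "card TP = card A + card B"
    using TPAB disj fA by (simp add: card_Un_disjoint card_image inj_on_def)
  then have cAB: "card A + card B = N" using cTP by simp
  have AB: "A \<inter> B = {}"
  proof (rule ccontr)
    assume "A \<inter> B \<noteq> {}"
    then obtain p where p: "p < N" "w!p" "w!(p+N)" by (auto simp: A_def B_def)
    have "p \<in> TP" "p + N \<in> TP" using p by (auto simp: TP_def)
    then obtain t t' where "t < N" "p = Phi ms t" "t' < N" "p + N = Phi ms t'"
      unfolding TPe by auto
    then show False using crit by metis
  qed
  have "card (A \<union> B) = N" using AB fA cAB by (simp add: card_Un_disjoint)
  moreover have "A \<union> B \<subseteq> {..<N}" by (auto simp: A_def B_def)
  ultimately have ABall: "A \<union> B = {..<N}"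
    by (metis card_lessThan card_subset_eq finite_lessThan)
  have "\<forall>i<N. w!i \<noteq> w!(i+N)"
  proof (intro allI impI)
    fix i assume i: "i < N"
    then have "i \<in> A \<union> B" using ABall by auto
    then show "w!i \<noteq> w!(i+N)" using AB i by (auto simp: A_def B_def)
  qed
  then show ?thesis using lw by (simp add: antip_def w_def)
qed

lemma inc_lt:
  assumes inc: "\<And>j. j < m \<Longrightarrow> (X::nat\<Rightarrow>nat) j < X (Suc j)"
  shows "i < j \<Longrightarrow> j \<le> m \<Longrightarrow> X i < X j"
proof (induct j)
  case 0 then show ?case by simp
next
  case (Suc j)
  then show ?case using inc[of j] by (cases "i = j") auto
qed

lemma inc_le:
  assumes inc: "\<And>j. j < m \<Longrightarrow> (X::nat\<Rightarrow>nat) j < X (Suc j)"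
  shows "i \<le> j \<Longrightarrow> j \<le> m \<Longrightarrow> X i \<le> X j"
  using inc_lt[where m=m and X=X, OF inc, of i j] by (cases "i = j") auto

lemma region_ex:
  assumes inc: "\<And>j. j < m \<Longrightarrow> (X::nat\<Rightarrow>nat) j < X (Suc j)"
    and "X 0 \<le> t" "t < X m"
  shows "\<exists>j<m. X j \<le> t \<and> t < X (Suc j)"
  using assms(2,3)
proof (induct m)
  case 0 then show ?case by simp
next
  case (Suc m)
  show ?case
  proof (cases "t < X m")
    case True
    have "\<exists>j<m. X j \<le> t \<and> t < X (Suc j)"
      apply (rule Suc.hyps) using Suc.prems True inc by auto
    then show ?thesis by (blast intro: less_SucI)
  next
    case False then show ?thesis using Suc.prems by auto
  qed
qed

lemma region_uniq:
  assumes inc: "\<And>j. j < m \<Longrightarrow> (X::nat\<Rightarrow>nat) j < X (Suc j)"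
    and "j < m" "X j \<le> t" "t < X (Suc j)" "j' < m" "X j' \<le> t" "t < X (Suc j')"
  shows "j = j'"
proof (rule ccontr)
  assume "j \<noteq> j'"
  then consider "j < j'" | "j' < j" by linarith
  then show False
  proof cases
    case 1 then have "X (Suc j) \<le> X j'" using inc_le[where m=m and X=X, OF inc, of "Suc j" j'] assms by auto
    then show ?thesis using assms by auto
  next
    case 2 then have "X (Suc j') \<le> X j" using inc_le[where m=m and X=X, OF inc, of "Suc j'" j] assms by auto
    then show ?thesis using assms by auto
  qed
qed

definition ridx :: "(nat \<Rightarrow> nat) \<Rightarrow> nat \<Rightarrow> nat \<Rightarrow> nat" where
  "ridx X m t = (THE j. j < m \<and> X j \<le> t \<and> t < X (Suc j))"

lemma ridx_eq:
  assumes inc: "\<And>j. j < m \<Longrightarrow> (X::nat\<Rightarrow>nat) j < X (Suc j)"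
    and "j < m" "X j \<le> t" "t < X (Suc j)"
  shows "ridx X m t = j"
  unfolding ridx_def
  apply (rule the_equality)
  using assms region_uniq[where m=m and X=X, OF inc] by blast+

lemma ridx_prop:
  assumes inc: "\<And>j. j < m \<Longrightarrow> (X::nat\<Rightarrow>nat) j < X (Suc j)"
    and "X 0 \<le> t" "t < X m"
  shows "ridx X m t < m \<and> X (ridx X m t) \<le> t \<and> t < X (Suc (ridx X m t))"
proof -
  obtain j where j: "j < m" "X j \<le> t" "t < X (Suc j)" using region_ex[where m=m and X=X, OF inc assms(2,3)] by blast
  then show ?thesis using ridx_eq[where m=m and X=X, OF inc j] by simp
qed

lemma Phi_Suc: "Suc t < length ms \<Longrightarrow> Phi ms (Suc t) = Phi ms t + 1 + ms!(Suc t)"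
  by (simp add: Phi_def take_Suc_conv_app_nth)

lemma Phi_0: "0 < length ms \<Longrightarrow> Phi ms 0 = ms!0"
  by (cases ms) (auto simp: Phi_def)

lemma pattern:
  fixes N K H q :: nat and f X Y :: "nat \<Rightarrow> nat"
  assumes q1: "1 \<le> q"
    and X0: "X 0 = 0"
    and Xinc: "\<And>j. j < q - 1 \<Longrightarrow> X j < X (Suc j)"
    and XK: "\<And>j. j < q - 1 \<Longrightarrow> X (Suc j) \<le> X j + K"
    and Y0: "Y 0 = X (q-1)"
    and Yq: "Y q = N"
    and Yinc: "\<And>l. l < q \<Longrightarrow> Y l < Y (Suc l)"
    and YH: "\<And>l. l < q \<Longrightarrow> Y (Suc l) \<le> Y l + H"
    and fX: "\<And>j. j < q \<Longrightarrow> H \<le> f (X j)"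
    and fY: "\<And>l. 0 < l \<Longrightarrow> l < q \<Longrightarrow> K \<le> f (Y l)"
  shows "\<exists>ms. length ms = N \<and> (\<forall>t<N. ms!t \<le> f t) \<and> antip N (concat (map blk ms))"
proof -
  define y0 where "y0 = Y 0"
  have Xle: "\<And>i j. i \<le> j \<Longrightarrow> j \<le> q - 1 \<Longrightarrow> X i \<le> X j" using inc_le[where m="q-1" and X=X, OF Xinc] by blast
  have Xlt: "\<And>i j. i < j \<Longrightarrow> j \<le> q - 1 \<Longrightarrow> X i < X j" using inc_lt[where m="q-1" and X=X, OF Xinc] by blast
  have Yle: "\<And>i j. i \<le> j \<Longrightarrow> j \<le> q \<Longrightarrow> Y i \<le> Y j" using inc_le[where m="q" and X=Y, OF Yinc] by blast
  have Ylt: "\<And>i j. i < j \<Longrightarrow> j \<le> q \<Longrightarrow> Y i < Y j" using inc_lt[where m="q" and X=Y, OF Yinc] by blast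
  have y0N: "y0 < N" using Ylt[of 0 q] q1 Yq by (simp add: y0_def)
  have YqN: "Y (q-1) < N" using Ylt[of "q-1" q] q1 Yq by simp
  define Ph where "Ph t = (if t < y0 then t + Y (Suc (ridx X (q-1) t)) - y0
                           else t + N - y0 + X (ridx Y q t))" for t
  have RX: "ridx X (q-1) t < q - 1 \<and> X (ridx X (q-1) t) \<le> t \<and> t < X (Suc (ridx X (q-1) t))"
    if "t < y0" for t
    using ridx_prop[where m="q-1" and X=X, OF Xinc, of t] that X0 by (simp add: y0_def Y0)
  have RY: "ridx Y q t < q \<and> Y (ridx Y q t) \<le> t \<and> t < Y (Suc (ridx Y q t))"
    if "y0 \<le> t" "t < N" for t
    using ridx_prop[where m="q" and X=Y, OF Yinc, of t] that Yq by (simp add: y0_def)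
  have PhX: "Ph t = t + Y (Suc j) - y0" if "t < y0" "j < q - 1" "X j \<le> t" "t < X (Suc j)" for t j
    using ridx_eq[where m="q-1" and X=X, OF Xinc that(2-4)] that(1) by (simp add: Ph_def)
  have PhY: "Ph t = t + N - y0 + X l" if "y0 \<le> t" "l < q" "Y l \<le> t" "t < Y (Suc l)" for t l
    using ridx_eq[where m="q" and X=Y, OF Yinc that(2-4)] that(1) by (simp add: Ph_def)
  have Yge: "y0 \<le> Y l" if "l \<le> q" for l using Yle[of 0 l] that by (auto simp: y0_def)
  have Ph_lowX: "Ph t < N" if "t < y0" for t
  proof -
    obtain j where j: "j < q - 1" "X j \<le> t" "t < X (Suc j)" using RX[OF \<open>t < y0\<close>] by blast
    have "Y (Suc j) \<le> Y (q-1)" using Yle[of "Suc j" "q-1"] j by simp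
    moreover have "Y (Suc j) \<ge> y0" using Yge[of "Suc j"] j by simp
    ultimately show ?thesis using PhX[OF that j] that YqN by simp
  qed
  have Ph_highY: "N \<le> Ph t" if "y0 \<le> t" "t < N" for t
  proof -
    obtain l where l: "l < q" "Y l \<le> t" "t < Y (Suc l)" using RY[OF \<open>y0 \<le> t\<close> \<open>t < N\<close>] by blast
    show ?thesis using PhY[OF that(1) l] that by simp
  qed
  have Ph_top: "Ph t < 2*N" if "t < N" for t
  proof (cases "t < y0")
    case True then show ?thesis using Ph_lowX by fastforce
  next
    case False
    obtain l where l: "l < q" "Y l \<le> t" "t < Y (Suc l)" using RY[of t] False \<open>t < N\<close> by auto
    have "X l \<le> X (q-1)" using Xle[of l "q-1"] l by simp
    then show ?thesis using PhY[of t l] False l that by (simp add: y0_def Y0)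
  qed
  have Ph_step: "Ph t < Ph (Suc t)" if "Suc t < N" for t
  proof (cases "Suc t < y0")
    case True
    obtain j where j: "j < q - 1" "X j \<le> t" "t < X (Suc j)" using RX[of t] True by auto
    obtain j' where j': "j' < q - 1" "X j' \<le> Suc t" "Suc t < X (Suc j')" using RX[OF True] by blast
    have "j \<le> j'"
    proof (rule ccontr)
      assume "\<not> j \<le> j'"
      then have "X (Suc j') \<le> X j" using Xle[of "Suc j'" j] j by simp
      then show False using j j' by simp
    qed
    then have yy: "Y (Suc j) \<le> Y (Suc j')" using Yle[of "Suc j" "Suc j'"] j' by simp
    have yg: "y0 \<le> Y (Suc j)" using Yge[of "Suc j"] j by simp
    show ?thesis using yy PhX[OF _ j] PhX[OF True j'] True yg j by simp
  next
    case False
    show ?thesis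
    proof (cases "t < y0")
      case True
      then show ?thesis using Ph_lowX[OF True] Ph_highY[of "Suc t"] False that by simp
    next
      case False2: False
      obtain l where l: "l < q" "Y l \<le> t" "t < Y (Suc l)" using RY[of t] False2 \<open>Suc t < N\<close> by auto
      obtain l' where l': "l' < q" "Y l' \<le> Suc t" "Suc t < Y (Suc l')" using RY[of "Suc t"] False \<open>Suc t < N\<close> by auto
      have "l \<le> l'"
      proof (rule ccontr)
        assume "\<not> l \<le> l'"
        then have "Y (Suc l') \<le> Y l" using Yle[of "Suc l'" l] l by simp
        then show False using l l' by simp
      qed
      then have "X l \<le> X l'" using Xle[of l l'] l' by simp
      then show ?thesis using PhY[of t l] PhY[of "Suc t" l'] l l' False False2 by simp
    qed
  qed
  have Ph_mono: "Ph t < Ph t'" if "t < t'" "t' < N" for t t'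
    using that
  proof (induct t')
    case 0 then show ?case by simp
  next
    case (Suc t')
    then show ?case using Ph_step[of t'] by (cases "t = t'") auto
  qed
  have Ph_crit: "Ph t' \<noteq> Ph t + N" if "t < N" "t' < N" for t t'
  proof
    assume eq: "Ph t' = Ph t + N"
    have t'hi: "y0 \<le> t'"
    proof (rule ccontr)
      assume "\<not> y0 \<le> t'" then have "Ph t' < N" using Ph_lowX by simp
      then show False using eq by simp
    qed
    have tlo: "t < y0"
    proof (rule ccontr)
      assume "\<not> t < y0" then have "N \<le> Ph t" using Ph_highY that by simp
      then show False using eq Ph_top[OF that(2)] by simp
    qed
    obtain j where j: "j < q - 1" "X j \<le> t" "t < X (Suc j)" using RX[OF tlo] by blast
    obtain l where l: "l < q" "Y l \<le> t'" "t' < Y (Suc l)" using RY[OF t'hi \<open>t' < N\<close>] by blast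
    have yg: "y0 \<le> Y (Suc j)" using Yge[of "Suc j"] j by simp
    have e2: "t' + X l = t + Y (Suc j)"
      using eq PhX[OF tlo j] PhY[OF t'hi l] yg y0N by simp
    show False
    proof (cases "l \<le> j")
      case True
      then have "X l \<le> X j" using Xle[of l j] j by simp
      moreover have "Y (Suc l) \<le> Y (Suc j)" using Yle[of "Suc l" "Suc j"] True j by simp
      ultimately show False using e2 j l by simp
    next
      case False
      then have "X (Suc j) \<le> X l" using Xle[of "Suc j" l] l by simp
      moreover have "Y (Suc j) \<le> Y l" using Yle[of "Suc j" l] False l by simp
      ultimately show False using e2 j l by simp
    qed
  qed
  define mf where "mf t = (if t = 0 then Ph 0 else Ph t - Ph (t - 1) - 1)" for t
  define ms where "ms = map mf [0..<N]"
  have lms: "length ms = N" by (simp add: ms_def)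
  have N1: "1 \<le> N" using y0N by simp
  have PhiPh: "Phi ms t = Ph t" if "t < N" for t
    using that
  proof (induct t)
    case 0 then show ?case using N1 by (simp add: Phi_0 lms ms_def mf_def)
  next
    case (Suc t)
    have "Phi ms (Suc t) = Phi ms t + 1 + ms!(Suc t)" using Phi_Suc[of t ms] Suc.prems lms by simp
    also have "\<dots> = Ph t + 1 + (Ph (Suc t) - Ph t - 1)"
      using Suc by (simp add: ms_def mf_def)
    also have "\<dots> = Ph (Suc t)" using Ph_step[of t] Suc.prems by simp
    finally show ?case .
  qed
  have sms: "sum_list ms = N"
  proof -
    have "Phi ms (N - 1) = N - 1 + sum_list ms" using Phi_last[OF lms N1] .
    moreover have "Ph (N - 1) = 2 * N - 1"
    proof -
      have hi: "y0 \<le> N - 1" using y0N by simp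
      have l: "q - 1 < q" "Y (q - 1) \<le> N - 1" "N - 1 < Y (Suc (q - 1))" using q1 YqN Yq by auto
      show ?thesis using PhY[OF hi l] y0N by (simp add: y0_def Y0)
    qed
    ultimately show ?thesis using PhiPh[of "N - 1"] N1 by simp
  qed
  have antp: "antip N (concat (map blk ms))"
    by (rule antip_crit[OF lms sms]) (simp add: PhiPh Ph_crit)
  have bound: "mf t \<le> f t" if "t < N" for t
  proof (cases "t = 0")
    case True
    show ?thesis
    proof (cases "0 < y0")
      case True2: True
      have j: "0 < q - 1" "X 0 \<le> 0" "0 < X (Suc 0)"
      proof -
        show "0 < q - 1"
        proof (rule ccontr)
          assume "\<not> 0 < q - 1" then have "q - 1 = 0" by simp
          then show False using True2 X0 by (simp add: y0_def Y0)
        qed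
        then show "0 < X (Suc 0)" using Xlt[of 0 1] X0 by simp
      qed (simp add: X0)
      have "Ph 0 = Y 1 - Y 0" using PhX[OF True2 j] by (simp add: y0_def)
      also have "\<dots> \<le> H" using YH[of 0] q1 by simp
      also have "\<dots> \<le> f 0" using fX[of 0] q1 X0 by simp
      finally show ?thesis using True by (simp add: mf_def)
    next
      case False
      then have y00: "y0 = 0" by simp
      have qq: "q = 1"
      proof (rule ccontr)
        assume "q \<noteq> 1" then have "X 0 < X (q-1)" using Xlt[of 0 "q-1"] q1 by simp
        then show False using y00 X0 by (simp add: y0_def Y0)
      qed
      have "Ph 0 = N" using PhY[of 0 0] y00 Yinc[of 0] qq X0 by (simp add: y0_def)
      also have "\<dots> \<le> H" using YH[of 0] qq Yq y00 by (simp add: y0_def)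
      also have "\<dots> \<le> f 0" using fX[of 0] q1 X0 by simp
      finally show ?thesis using True by (simp add: mf_def)
    qed
  next
    case False
    then obtain s where s: "t = Suc s" by (cases t) auto
    have mfe: "mf t = Ph t - Ph s - 1" using s by (simp add: mf_def)
    consider "t < y0" | "t = y0" | "y0 < t" by linarith
    then show ?thesis
    proof cases
      case 1
      obtain j' where j': "j' < q - 1" "X j' \<le> t" "t < X (Suc j')" using RX[OF 1] by blast
      show ?thesis
      proof (cases "t = X j'")
        case True
        then have j'0: "j' \<noteq> 0" using X0 s True by (cases "j' = 0") auto
        then obtain j where jj: "j' = Suc j" by (cases j') auto
        have jp: "j < q - 1" "X j \<le> s" "s < X (Suc j)"
          using j' jj True Xlt[of j "Suc j"] s by auto
        have yg: "y0 \<le> Y j'" using Yge[of j'] j' by simp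
        have jq: "j' < q" using j' by simp
        have "Ph t - Ph s - 1 = Y (Suc j') - Y j'"
          using PhX[OF 1 j'] PhX[of s j] jp 1 s jj yg Ylt[of j' "Suc j'"] j' by simp
        also have "\<dots> \<le> H" using YH[OF jq] by simp
        also have "\<dots> \<le> f t" using fX[OF jq] True by simp
        finally show ?thesis using mfe by simp
      next
        case False
        have jp: "X j' \<le> s" "s < X (Suc j')" using j' False s by auto
        have yg: "y0 \<le> Y (Suc j')" using Yge[of "Suc j'"] j' by simp
        have "Ph t - Ph s - 1 = 0" using PhX[OF 1 j'] PhX[of s j'] jp j' 1 s yg by simp
        then show ?thesis using mfe by simp
      qed
    next
      case 2
      have q2: "2 \<le> q"
      proof (rule ccontr)
        assume "\<not> 2 \<le> q" then have "q = 1" using q1 by simp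
        then show False using 2 False X0 by (simp add: y0_def Y0)
      qed
      have Pt: "Ph t = N" using PhY[of t 0] 2 Yinc[of 0] q1 X0 by (simp add: y0_def)
      have sq: "Suc (q - 2) = q - 1" using q2 by simp
      have q21: "q - 2 < q - 1" using q2 by simp
      have xx: "X (q - 2) < X (q - 1)" using Xlt[OF q21] by simp
      have jp: "q - 2 < q - 1" "X (q - 2) \<le> s" "s < X (Suc (q - 2))"
        using q21 xx 2 s sq by (auto simp: y0_def Y0)
      have Ps: "Ph s = s + Y (q - 1) - y0" using PhX[OF _ jp] 2 s sq by simp
      have yg: "y0 \<le> Y (q-1)" using Yge[of "q-1"] by simp
      have "Ph t - Ph s - 1 = Y q - Y (q - 1)"
        using Pt Ps Yq 2 s yg YqN by simp
      also have "\<dots> \<le> H" using YH[of "q-1"] q1 by simp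
      also have "\<dots> \<le> f t" using fX[of "q-1"] q1 2 by (simp add: y0_def Y0)
      finally show ?thesis using mfe by simp
    next
      case 3
      obtain l' where l': "l' < q" "Y l' \<le> t" "t < Y (Suc l')" using RY[of t] 3 \<open>t < N\<close> by auto
      show ?thesis
      proof (cases "t = Y l'")
        case True
        have l'0: "l' \<noteq> 0" using True 3 by (cases "l' = 0") (auto simp: y0_def)
        then obtain l where ll: "l' = Suc l" by (cases l') auto
        have lp: "l < q" "Y l \<le> s" "s < Y (Suc l)" using l' ll True Ylt[of l "Suc l"] s by auto
        have yg: "y0 \<le> Y l" using Yge[of l] lp by simp
        have sy: "y0 \<le> s" using lp yg by simp
        have lq: "l < q - 1" using ll l' by simp
        have l0: "0 < l'" using l'0 by simp
        have "Ph t - Ph s - 1 = X l' - X l"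
          using PhY[of t l'] PhY[OF sy lp] l' 3 s ll Xlt[of l l'] by simp
        also have "\<dots> \<le> K" using XK[OF lq] ll by simp
        also have "\<dots> \<le> f t" using fY[OF l0 l'(1)] True by simp
        finally show ?thesis using mfe by simp
      next
        case False
        have lp: "Y l' \<le> s" "s < Y (Suc l')" using l' False s by auto
        have yg: "y0 \<le> Y l'" using Yge[of l'] l' by simp
        have sy: "y0 \<le> s" using lp yg by simp
        have "Ph t - Ph s - 1 = 0" using PhY[of t l'] PhY[OF sy l'(1) lp] l' 3 s by simp
        then show ?thesis using mfe by simp
      qed
    qed
  qed
  show ?thesis
    by (rule exI[of _ ms]) (use lms antp bound in \<open>simp add: ms_def\<close>)
qed

definition validc :: "nat set \<Rightarrow> nat \<Rightarrow> nat \<Rightarrow> nat \<Rightarrow> bool" where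
  "validc S lo hi D \<longleftrightarrow> (\<forall>t. lo \<le> t \<and> t < hi \<longrightarrow> (\<exists>z. (z \<in> S \<or> z = hi) \<and> t < z \<and> z \<le> t + D))"

lemma validc_mono: "validc S lo hi D \<Longrightarrow> S \<subseteq> S' \<Longrightarrow> validc S' lo hi D"
  unfolding validc_def by blast

lemma validc_lo: "validc S lo hi D \<Longrightarrow> lo \<le> lo' \<Longrightarrow> validc S lo' hi D"
  unfolding validc_def by auto

lemma chain:
  assumes "P \<subseteq> {..<hi}" "validc P lo hi D"
  shows "\<exists>S\<subseteq>P. validc S lo hi D \<and> card S * D \<le> 2*(hi - lo)"
  using assms
proof (induct "hi - lo" arbitrary: lo rule: less_induct)
  case less
  have fP: "finite P" using less.prems(1) finite_subset by blast
  show ?case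
  proof (cases "hi \<le> lo + D")
    case True
    have "validc {} lo hi D" unfolding validc_def using True by auto
    then show ?thesis by (intro exI[of _ "{}"]) simp
  next
    case False
    have "\<exists>z. (z \<in> P \<or> z = hi) \<and> lo < z \<and> z \<le> lo + D"
      using less.prems(2) False unfolding validc_def by auto
    then obtain z1 where z1: "z1 \<in> P" "lo < z1" "z1 \<le> lo + D" using False by auto
    define p1 where "p1 = Max {z \<in> P. z \<le> lo + D}"
    have p1in: "p1 \<in> {z \<in> P. z \<le> lo + D}" unfolding p1_def
      by (rule Max_in) (use fP z1 in auto)
    have p1: "p1 \<in> P" "p1 \<le> lo + D" "z1 \<le> p1"
      using p1in Max_ge[of "{z \<in> P. z \<le> lo + D}" z1] fP z1
      unfolding p1_def by auto
    have p1max: "\<And>z. z \<in> P \<Longrightarrow> z \<le> lo + D \<Longrightarrow> z \<le> p1"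
      using Max_ge[of "{z \<in> P. z \<le> lo + D}"] fP unfolding p1_def by auto
    have p1hi: "p1 < hi" using p1 less.prems(1) by auto
    show ?thesis
    proof (cases "hi \<le> p1 + D")
      case True
      have "validc {p1} lo hi D"
        unfolding validc_def
      proof (intro allI impI)
        fix t assume t: "lo \<le> t \<and> t < hi"
        show "\<exists>z. (z \<in> {p1} \<or> z = hi) \<and> t < z \<and> z \<le> t + D"
        proof (cases "t < p1")
          case True then show ?thesis using p1 t by (intro exI[of _ p1]) auto
        next
          case False then show ?thesis using \<open>hi \<le> p1 + D\<close> t by (intro exI[of _ hi]) auto
        qed
      qed
      moreover have "card {p1} * D \<le> 2*(hi - lo)" using False by simp
      ultimately show ?thesis using p1 by (intro exI[of _ "{p1}"]) auto
    next
      case False2: False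
      have "\<exists>z. (z \<in> P \<or> z = hi) \<and> p1 < z \<and> z \<le> p1 + D"
        using less.prems(2) p1hi z1 p1 unfolding validc_def by auto
      then obtain z2 where z2: "z2 \<in> P" "p1 < z2" "z2 \<le> p1 + D" using False2 by auto
      have z2lo: "lo + D < z2" using p1max[of z2] z2 by force
      define p2 where "p2 = Max {z \<in> P. z \<le> p1 + D}"
      have p2in: "p2 \<in> {z \<in> P. z \<le> p1 + D}" unfolding p2_def
        by (rule Max_in) (use fP z2 in auto)
      have p2: "p2 \<in> P" "p2 \<le> p1 + D" "z2 \<le> p2"
        using p2in Max_ge[of "{z \<in> P. z \<le> p1 + D}" z2] fP z2
        unfolding p2_def by auto
      have p2hi: "p2 < hi" using p2 less.prems(1) by auto
      have "hi - p2 < hi - lo" using p2 z2lo p2hi by simp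
      moreover have "validc P p2 hi D" using validc_lo[OF less.prems(2)] p2 z2lo by simp
      ultimately obtain S' where S': "S' \<subseteq> P" "validc S' p2 hi D" "card S' * D \<le> 2*(hi - p2)"
        using less.hyps[of p2] less.prems(1) by blast
      define S where "S = insert p1 (insert p2 S')"
      have "validc S lo hi D"
        unfolding validc_def
      proof (intro allI impI)
        fix t assume t: "lo \<le> t \<and> t < hi"
        show "\<exists>z. (z \<in> S \<or> z = hi) \<and> t < z \<and> z \<le> t + D"
        proof (cases "t < p1")
          case True then show ?thesis using p1 t by (intro exI[of _ p1]) (auto simp: S_def)
        next
          case False
          show ?thesis
          proof (cases "t < p2")
            case True then show ?thesis using p2 t False by (intro exI[of _ p2]) (auto simp: S_def)
          next
            case False3: False
            then obtain z where "(z \<in> S' \<or> z = hi) \<and> t < z \<and> z \<le> t + D"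
              using S'(2) t False3 unfolding validc_def by (meson not_less)
            then show ?thesis by (auto simp: S_def)
          qed
        qed
      qed
      moreover have "card S * D \<le> 2*(hi - lo)"
      proof -
        have fS': "finite S'" using S'(1) fP finite_subset by blast
        have c1: "card (insert p2 S') \<le> Suc (card S')" by (simp add: card_insert_if fS')
        have c2: "card S \<le> Suc (card (insert p2 S'))" unfolding S_def by (simp add: card_insert_if fS')
        have "card S \<le> card S' + 2" using c1 c2 by simp
        then have "card S * D \<le> (card S' + 2) * D" by (rule mult_right_mono) simp
        also have "\<dots> = card S' * D + 2 * D" by (simp add: algebra_simps)
        also have "\<dots> \<le> 2*(hi - p2) + 2*D" using S'(3) by simp
        also have "\<dots> \<le> 2*(hi - lo)" using z2lo p2 p2hi by simp
        finally show ?thesis .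
      qed
      moreover have "S \<subseteq> P" using S' p1 p2 by (auto simp: S_def)
      ultimately show ?thesis by blast
    qed
  qed
qed

lemma sorted_nth_less_iff:
  assumes "sorted_wrt (<) (xs::nat list)" "i < length xs" "j < length xs"
  shows "xs!i < xs!j \<longleftrightarrow> i < j"
proof
  assume a: "xs!i < xs!j"
  show "i < j"
  proof (rule ccontr)
    assume "\<not> i < j"
    then consider "i = j" | "j < i" by linarith
    then show False using a sorted_wrt_nth_less[OF assms(1), of j i] assms by cases auto
  qed
qed (use sorted_wrt_nth_less[OF assms(1)] assms in auto)

lemma mod_small2:
  fixes a b N :: nat
  assumes "a < N" "b < N"
  shows "(a + b) mod N = (if a + b < N then a + b else a + b - N)"
proof (cases "a + b < N")
  case False
  then have "a + b - N < N" using assms by simp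
  moreover have "a + b = (a + b - N) + N" using False by simp
  ultimately show ?thesis using False by (metis mod_add_self2 mod_less)
qed simp

lemma build:
  fixes L :: "nat list" and N K H q x0 :: nat and Xs :: "nat list"
  assumes lenL: "length L = N" and q1: "1 \<le> q" and lenX: "length Xs = q"
    and sX: "sorted_wrt (<) Xs" and x0: "Xs!0 = x0"
    and XN: "\<And>i. i < q \<Longrightarrow> Xs!i < N"
    and XH: "\<And>i. i < q \<Longrightarrow> H \<le> L!(Xs!i)"
    and XK: "\<And>i. Suc i < q \<Longrightarrow> Xs!(Suc i) \<le> Xs!i + K"
    and Xlast: "Xs!(q-1) < x0 + K"
    and dense: "\<And>t. t < N \<Longrightarrow> \<exists>d. 1 \<le> d \<and> d \<le> H \<and> (t + d) mod N < N \<and> K \<le> L!((t + d) mod N)"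
    and cardG: "K + q \<le> card {t. t < N \<and> K \<le> L!t}"
    and qH: "2*N < q*H"
  shows "\<exists>ms. length ms = N \<and> list_all2 (\<le>) ms (rotate x0 L) \<and> antip N (concat (map blk ms))"
proof -
  have N1: "0 < N" using XN[of 0] q1 by simp
  have x0N: "x0 < N" using XN[of 0] q1 x0 by simp
  have Xge: "x0 \<le> Xs!i" if "i < q" for i
    using sorted_wrt_nth_less[OF sX, of 0 i] that x0 lenX by (cases i) auto
  define f' where "f' s = L ! ((x0 + s) mod N)" for s
  have rot: "rotate x0 L ! s = f' s" if "s < N" for s
    using nth_rotate[of s L x0] that lenL by (simp add: f'_def)
  define Xf where "Xf j = Xs!j - x0" for j
  have Xf0: "Xf 0 = 0" by (simp add: Xf_def x0)
  have Xfinc: "Xf j < Xf (Suc j)" if "j < q - 1" for j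
  proof -
    have a: "Suc j < q" "j < q" using that by auto
    have "Xs!j < Xs!(Suc j)" using sorted_wrt_nth_less[OF sX, of j "Suc j"] a lenX by simp
    then show ?thesis using Xge[OF a(2)] by (simp add: Xf_def)
  qed
  have XfK: "Xf (Suc j) \<le> Xf j + K" if "j < q - 1" for j
  proof -
    have a: "Suc j < q" "j < q" using that by auto
    show ?thesis using XK[OF a(1)] Xge[OF a(2)] Xge[OF a(1)] by (simp add: Xf_def)
  qed
  have fXf: "H \<le> f' (Xf j)" if "j < q" for j
  proof -
    have "(x0 + Xf j) mod N = Xs!j" using Xge[OF that] XN[OF that] by (simp add: Xf_def)
    then show ?thesis using XH[OF that] by (simp add: f'_def)
  qed
  define xq where "xq = Xf (q-1)"
  have xqK: "xq < K" using Xlast Xge[of "q-1"] q1 by (simp add: xq_def Xf_def)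
  have xqN: "xq < N" using XN[of "q-1"] q1 by (simp add: xq_def Xf_def)
  define G where "G = {t. t < N \<and> K \<le> L!t}"
  define G' where "G' = {s. s < N \<and> K \<le> f' s}"
  have G'G: "(\<lambda>s. (x0 + s) mod N) ` G' = G"
  proof
    show "(\<lambda>s. (x0 + s) mod N) ` G' \<subseteq> G" using N1 by (auto simp: G'_def G_def f'_def)
    show "G \<subseteq> (\<lambda>s. (x0 + s) mod N) ` G'"
    proof
      fix t assume t: "t \<in> G"
      define s where "s = (t + N - x0) mod N"
      have "(x0 + s) mod N = t"
      proof -
        have "(x0 + s) mod N = (x0 + (t + N - x0)) mod N" by (simp add: s_def mod_add_right_eq)
        also have "x0 + (t + N - x0) = t + N" using x0N by simp
        finally show ?thesis using t by (simp add: G_def)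
      qed
      moreover have "s \<in> G'" using t calculation N1 by (auto simp: G'_def G_def f'_def s_def)
      ultimately show "t \<in> (\<lambda>s. (x0 + s) mod N) ` G'" by force
    qed
  qed
  have injrot: "inj_on (\<lambda>s. (x0 + s) mod N) G'"
  proof (rule inj_onI)
    fix a b assume ab: "a \<in> G'" "b \<in> G'" "(x0 + a) mod N = (x0 + b) mod N"
    have "a < N" "b < N" using ab by (auto simp: G'_def)
    then show "a = b" using ab(3) mod_small2[of x0 N a] mod_small2[of x0 N b] x0N
      by (auto split: if_splits)
  qed
  have cG': "card G' = card G" using G'G injrot card_image by fastforce
  define P where "P = G' \<inter> {xq<..<N}"
  have fG': "finite G'" by (simp add: G'_def)
  have cP: "q \<le> card P"
  proof -
    have "G' \<subseteq> (G' \<inter> {..xq}) \<union> P" by (auto simp: P_def G'_def)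
    then have "card G' \<le> card (G' \<inter> {..xq}) + card P"
      by (metis (no_types, lifting) card_Un_le card_mono fG' finite_Int finite_Un P_def le_trans)
    moreover have "card (G' \<inter> {..xq}) \<le> K"
    proof -
      have "card (G' \<inter> {..xq}) \<le> card {..xq}" by (rule card_mono) auto
      then show ?thesis using xqK by simp
    qed
    ultimately show ?thesis using cG' cardG by (simp add: G_def)
  qed
  have vP: "validc P xq N H"
    unfolding validc_def
  proof (intro allI impI)
    fix t assume t: "xq \<le> t \<and> t < N"
    obtain d where d: "1 \<le> d" "d \<le> H" "K \<le> L!(((x0 + t) mod N + d) mod N)"
      using dense[of "(x0 + t) mod N"] N1 by auto
    have eqm: "((x0 + t) mod N + d) mod N = (x0 + (t + d)) mod N" by (simp add: mod_add_left_eq add.assoc)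
    show "\<exists>z. (z \<in> P \<or> z = N) \<and> t < z \<and> z \<le> t + H"
    proof (cases "t + d < N")
      case True
      have "t + d \<in> P" using True d eqm t by (auto simp: P_def G'_def f'_def)
      then show ?thesis using d by (intro exI[of _ "t + d"]) auto
    next
      case False then show ?thesis using d t by (intro exI[of _ N]) auto
    qed
  qed
  have PN: "P \<subseteq> {..<N}" by (auto simp: P_def)
  obtain S where S: "S \<subseteq> P" "validc S xq N H" "card S * H \<le> 2*(N - xq)"
    using chain[OF PN vP] by blast
  have cSq: "card S < q"
  proof (rule ccontr)
    assume "\<not> card S < q"
    then have "q * H \<le> card S * H" by simp
    then show False using S(3) qH by linarith
  qed
  have fP: "finite P" by (simp add: P_def)
  have fS: "finite S" using S(1) fP finite_subset by blast
  obtain T where T: "T \<subseteq> P - S" "card T = q - 1 - card S" "finite T"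
  proof (rule obtain_subset_with_card_n)
    show "q - 1 - card S \<le> card (P - S)" using cP cSq card_Diff_subset[OF fS S(1)] by simp
  qed
  define S' where "S' = S \<union> T"
  have dST: "S \<inter> T = {}" using T(1) by blast
  have cS': "card S' = q - 1"
    using T fS cSq card_Un_disjoint[OF fS T(3) dST] by (simp add: S'_def)
  have S'P: "S' \<subseteq> P" using S T by (auto simp: S'_def)
  have vS': "validc S' xq N H" using validc_mono[OF S(2)] by (auto simp: S'_def)
  have fS': "finite S'" using S'P fP finite_subset by blast
  define ys where "ys = sorted_list_of_set S'"
  have lys: "length ys = q - 1" using cS' by (simp add: ys_def)
  have sys: "sorted_wrt (<) ys" by (simp add: ys_def strict_sorted_list_of_set)
  have setys: "set ys = S'" using fS' by (simp add: ys_def)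
  have ysP: "ys!i \<in> P" if "i < q - 1" for i
  proof -
    have "ys!i \<in> set ys" using that lys by simp
    then show ?thesis using setys S'P by blast
  qed
  define Yf where "Yf l = (if l = 0 then xq else if l < q then ys!(l-1) else N)" for l
  have Yf0: "Yf 0 = Xf (q-1)" by (simp add: Yf_def xq_def)
  have Yfq: "Yf q = N" using q1 by (simp add: Yf_def)
  have YfN: "Yf l \<le> N" for l
  proof -
    have "ys!(l-1) < N" if "0 < l" "l < q" using ysP[of "l-1"] that by (auto simp: P_def)
    then show ?thesis using xqN by (auto simp: Yf_def)
  qed
  have Yfinc: "Yf l < Yf (Suc l)" if "l < q" for l
  proof (cases "Suc l < q")
    case True
    show ?thesis
    proof (cases l)
      case 0
      then show ?thesis using ysP[of 0] True by (auto simp: Yf_def P_def)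
    next
      case (Suc l')
      then show ?thesis using sorted_wrt_nth_less[OF sys, of l' "Suc l'"] True lys by (simp add: Yf_def)
    qed
  next
    case False
    then have "Suc l = q" using that by simp
    then show ?thesis
    proof (cases l)
      case 0 then show ?thesis using \<open>Suc l = q\<close> xqN by (simp add: Yf_def)
    next
      case (Suc l')
      then show ?thesis using ysP[of l'] \<open>Suc l = q\<close> by (auto simp: Yf_def P_def)
    qed
  qed
  have YfH: "Yf (Suc l) \<le> Yf l + H" if "l < q" for l
  proof -
    have lo: "xq \<le> Yf l"
    proof (cases "l = 0")
      case False
      then have "ys!(l-1) \<in> P" using ysP[of "l-1"] that by simp
      then show ?thesis using that False by (auto simp: Yf_def P_def)
    qed (simp add: Yf_def)
    have hi: "Yf l < N" using Yfinc[OF that] YfN[of "Suc l"] by simp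
    obtain z where z: "z \<in> S' \<or> z = N" "Yf l < z" "z \<le> Yf l + H"
      using vS' lo hi unfolding validc_def by blast
    have "Yf (Suc l) \<le> z"
    proof (cases "z = N")
      case True then show ?thesis using YfN by simp
    next
      case False
      then have "z \<in> set ys" using z setys by simp
      then obtain i where i: "i < q - 1" "z = ys!i" using lys by (auto simp: in_set_conv_nth)
      have li: "l \<le> i"
      proof (cases "l = 0")
        case False
        then have "ys!(l-1) < ys!i" using z i by (simp add: Yf_def that)
        then have "l - 1 < i" using sorted_nth_less_iff[OF sys, of "l-1" i] lys i that by simp
        then show ?thesis by simp
      qed simp
      then have Sl: "Suc l < q" using i by simp
      have "ys!l \<le> ys!i"
        using sorted_wrt_nth_less[OF sys, of l i] lys i li by (cases "l = i") auto
      then show ?thesis using Sl i by (simp add: Yf_def)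
    qed
    then show ?thesis using z by simp
  qed
  have fYf: "K \<le> f' (Yf l)" if "0 < l" "l < q" for l
    using ysP[of "l-1"] that by (auto simp: Yf_def P_def G'_def)
  obtain ms where ms: "length ms = N" "\<forall>t<N. ms!t \<le> f' t" "antip N (concat (map blk ms))"
    using pattern[where q=q and X=Xf and K=K and Y=Yf and N=N and H=H and f=f',
        OF q1 Xf0 Xfinc XfK Yf0 Yfq Yfinc YfH fXf fYf]
    by blast
  have "list_all2 (\<le>) ms (rotate x0 L)"
    using ms rot lenL by (simp add: list_all2_conv_all_nth)
  then show ?thesis using ms by blast
qed

lemma sq4:
  fixes a N :: nat assumes "a \<le> N" shows "4*((N - a)*a) \<le> N*N"
proof -
  obtain b where b: "N = a + b" using assms le_Suc_ex by blast
  have "int (4*((N - a)*a)) = 4*int b*int a" using b by simp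
  also have "\<dots> \<le> (int a + int b)*(int a + int b)"
  proof -
    have "0 \<le> (int a - int b)*(int a - int b)" by simp
    then show ?thesis by (simp add: algebra_simps)
  qed
  also have "\<dots> = int (N*N)" using b by simp
  finally show ?thesis by linarith
qed

lemma ineq_main:
  fixes N g K H :: nat
  assumes "g \<le> N" "K \<le> H" "1 \<le> K" "H = K \<or> (H \<le> N \<and> g \<le> N + 1 - H)"
  shows "4*((N - g)*(K-1) + g*(H-1)) \<le> 4*N*(K-1) + N*N"
proof -
  obtain m where m: "N = m + g" using assms(1) by (metis le_add_diff_inverse2)
  obtain e where e: "H = K + e" using assms(2) le_Suc_ex by blast
  obtain k where k: "K = Suc k" using assms(3) by (cases K) auto
  have eq: "(N - g)*(K-1) + g*(H-1) = N*(K-1) + g*e"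
    using m e k by (simp add: algebra_simps)
  show ?thesis
  proof (cases "e = 0")
    case True then show ?thesis using eq by simp
  next
    case False
    then have H: "H \<le> N" "g \<le> N + 1 - H" using assms(4) e by auto
    have "g*e \<le> (N + 1 - H)*e" using H by simp
    also have "\<dots> \<le> (N + 1 - H)*(H - 1)"
    proof -
      have "e \<le> H - 1" using e assms(3) by simp
      then show ?thesis by (rule mult_left_mono) simp
    qed
    also have "(N + 1 - H) = N - (H - 1)" using H False e by simp
    finally have "4*(g*e) \<le> 4*((N - (H - 1))*(H - 1))" by simp
    also have "\<dots> \<le> N*N" using sq4[of "H - 1" N] H by simp
    finally show ?thesis using eq by simp
  qed
qed

lemma core:
  fixes L :: "nat list" and N K :: nat
  assumes lenL: "length L = N" and N1: "1 \<le> N" and K1: "1 \<le> K"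
    and big: "4*N*(K-1) + N*N + 4*((2*N div K) * ((N+K-1) div K) + K + 2*N div K + 1)*N
              < 4 * sum_list L"
  shows "\<exists>r ms. length ms = N \<and> list_all2 (\<le>) ms (rotate r L) \<and> antip N (concat (map blk ms))"
proof -
  have sumL: "sum_list L = (\<Sum>t<N. L!t)"
    using sum_list_sum_nth[of L] lenL by (simp add: atLeast0LessThan)
  show ?thesis
  proof (cases "\<exists>t<N. N \<le> L!t")
    case True
    then obtain t where t: "t < N" "N \<le> L!t" by blast
    define f where "f s = L!((t + s) mod N)" for s
    obtain ms where ms: "length ms = N" "\<forall>s<N. ms!s \<le> f s" "antip N (concat (map blk ms))"
      using pattern[where q=1 and X="\<lambda>_. 0" and Y="\<lambda>l. if l = 0 then 0 else N" and N=N
          and H=N and K=0 and f=f] t N1 by (auto simp: f_def)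
    have "list_all2 (\<le>) ms (rotate t L)"
      using ms lenL nth_rotate[of _ L t] by (simp add: list_all2_conv_all_nth f_def)
    then show ?thesis using ms by blast
  next
    case False
    then have Lsmall: "\<And>t. t < N \<Longrightarrow> L!t < N" by (simp add: not_le)
    define G where "G = {t. t < N \<and> K \<le> L!t}"
    have fG: "finite G" by (simp add: G_def)
    show ?thesis
    proof (cases "G = {}")
      case True
      then have "\<And>t. t < N \<Longrightarrow> L!t \<le> K - 1" by (force simp: G_def)
      then have "(\<Sum>t<N. L!t) \<le> N*(K-1)" using sum_bounded_above[of "{..<N}" "\<lambda>t. L!t" "K-1"] by simp
      then show ?thesis using big sumL by simp
    next
      case Gne: False
      define dense where "dense D \<longleftrightarrow> (\<forall>t<N. \<exists>d. 1 \<le> d \<and> d \<le> D \<and> (t + d) mod N \<in> G)" for D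
      have denseN: "dense D" if "N \<le> D" for D
        unfolding dense_def
      proof (intro allI impI)
        fix t assume t: "t < N"
        obtain g where g: "g \<in> G" using Gne by blast
        then have gN: "g < N" by (simp add: G_def)
        define d where "d = (if t < g then g - t else g + N - t)"
        have "(t + d) mod N = g"
        proof (cases "t < g")
          case True then show ?thesis using gN by (simp add: d_def)
        next
          case False
          then have "t + d = g + N" using t by (simp add: d_def)
          then show ?thesis using gN by simp
        qed
        moreover have "1 \<le> d" "d \<le> D" using t gN that by (auto simp: d_def)
        ultimately show "\<exists>d. 1 \<le> d \<and> d \<le> D \<and> (t + d) mod N \<in> G" using g by auto
      qed
      define H where "H = (LEAST D. K \<le> D \<and> dense D)"
      have Hex: "K \<le> max K N \<and> dense (max K N)" using denseN by simp
      have HP: "K \<le> H \<and> dense H" unfolding H_def by (rule LeastI[of "\<lambda>D. K \<le> D \<and> dense D", OF Hex])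
      have Hle: "H \<le> max K N" unfolding H_def by (rule Least_le[of "\<lambda>D. K \<le> D \<and> dense D", OF Hex])
      have KH: "K \<le> H" and dH: "dense H" using HP by auto
      define E where "E = {t. t < N \<and> H \<le> L!t}"
      have EG: "E \<subseteq> G" using KH by (auto simp: E_def G_def)
      have fE: "finite E" by (simp add: E_def)
      have Halt: "H = K \<or> (H \<le> N \<and> card G \<le> N + 1 - H)"
      proof (cases "H = K")
        case False
        then have HK: "K < H" using KH by simp
        have HN: "H \<le> N" using Hle HK by simp
        have nd: "\<not> dense (H - 1)"
        proof
          assume "dense (H - 1)"
          then have "H \<le> H - 1" unfolding H_def using HK
            by (metis (no_types, lifting) H_def Least_le le_diff_conv2 less_imp_le_nat Suc_leI
                Suc_eq_plus1 K1 le_trans)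
          then show False using HK K1 by simp
        qed
        then obtain t where t: "t < N" "\<And>d. 1 \<le> d \<Longrightarrow> d \<le> H - 1 \<Longrightarrow> (t + d) mod N \<notin> G"
          unfolding dense_def by blast
        define Z where "Z = (\<lambda>d. (t + d) mod N) ` {1..H-1}"
        have injZ: "inj_on (\<lambda>d. (t + d) mod N) {1..H-1}"
        proof (rule inj_onI)
          fix a b assume ab: "a \<in> {1..H-1}" "b \<in> {1..H-1}" "(t + a) mod N = (t + b) mod N"
          then have "a < N" "b < N" using HN by auto
          then show "a = b" using ab(3) mod_small2[of t N a] mod_small2[of t N b] t(1)
            by (auto split: if_splits)
        qed
        have cZ: "card Z = H - 1" using injZ by (simp add: Z_def card_image)
        have "G \<subseteq> {..<N} - Z" using t by (auto simp: Z_def G_def)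
        moreover have "Z \<subseteq> {..<N}" using N1 by (auto simp: Z_def)
        ultimately have "card G \<le> N - (H - 1)"
          using card_mono[of "{..<N} - Z" G] card_Diff_subset[of Z "{..<N}"] cZ
          by (metis card_lessThan finite_Diff finite_lessThan finite_subset)
        then show ?thesis using HN HK by simp
      qed simp
      have sumE: "(\<Sum>t\<in>E. L!t) \<le> card E * N"
        using sum_bounded_above[of E "\<lambda>t. L!t" N] Lsmall by (auto simp: E_def less_imp_le)
      have sumNG: "(\<Sum>t\<in>{..<N} - G. L!t) \<le> (N - card G) * (K - 1)"
      proof -
        have "(\<Sum>t\<in>{..<N} - G. L!t) \<le> card ({..<N} - G) * (K - 1)"
          using sum_bounded_above[of "{..<N} - G" "\<lambda>t. L!t" "K - 1"] by (force simp: G_def)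
        moreover have "card ({..<N} - G) = N - card G"
          using card_Diff_subset[of G "{..<N}"] fG by (auto simp: G_def)
        ultimately show ?thesis by simp
      qed
      have sumGE: "(\<Sum>t\<in>G - E. L!t) \<le> card G * (H - 1)"
      proof -
        have "(\<Sum>t\<in>G - E. L!t) \<le> card (G - E) * (H - 1)"
          using sum_bounded_above[of "G - E" "\<lambda>t. L!t" "H - 1"] by (force simp: G_def E_def)
        moreover have "card (G - E) \<le> card G" using fG by (simp add: card_mono)
        ultimately show ?thesis by (meson le_trans mult_le_mono1)
      qed
      have split1: "(\<Sum>t<N. L!t) = (\<Sum>t\<in>E. L!t) + (\<Sum>t\<in>{..<N} - E. L!t)"
        using sum.subset_diff[of E "{..<N}" "\<lambda>t. L!t"] by (auto simp: E_def add.commute)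
      have split2: "(\<Sum>t\<in>{..<N} - E. L!t) = (\<Sum>t\<in>{..<N} - G. L!t) + (\<Sum>t\<in>G - E. L!t)"
      proof -
        have "{..<N} - E = ({..<N} - G) \<union> (G - E)" using EG by (auto simp: G_def)
        moreover have "({..<N} - G) \<inter> (G - E) = {}" by auto
        ultimately show ?thesis by (simp add: sum.union_disjoint fG)
      qed
      have gN: "card G \<le> N" using card_mono[of "{..<N}" G] by (auto simp: G_def)
      have "sum_list L \<le> ((N - card G)*(K-1) + card G*(H-1)) + card E * N"
      proof -
        have "sum_list L = (\<Sum>t\<in>E. L!t) + ((\<Sum>t\<in>{..<N} - G. L!t) + (\<Sum>t\<in>G - E. L!t))"
          using sumL split1 split2 by simp
        also have "\<dots> \<le> card E * N + ((N - card G)*(K-1) + card G*(H-1))"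
          using sumE sumNG sumGE by (meson add_mono)
        finally show ?thesis by simp
      qed
      then have "4 * sum_list L \<le> 4*((N - card G)*(K-1) + card G*(H-1)) + 4*(card E * N)"
        by simp
      also have "\<dots> \<le> 4*N*(K-1) + N*N + 4*(card E * N)"
        using ineq_main[OF gN KH K1 Halt] by simp
      finally have sumB: "4 * sum_list L \<le> 4*N*(K-1) + N*N + 4*(card E * N)" .
      define q where "q = 2*N div K + 1"
      define w where "w = (N+K-1) div K"
      have cE: "(q - 1) * w + K + q \<le> card E"
      proof (rule ccontr)
        assume "\<not> (q - 1) * w + K + q \<le> card E"
        then have "card E * N \<le> ((2*N div K) * w + K + 2*N div K + 1 - 1) * N"
          by (simp add: q_def)
        then show False using sumB big N1 by (simp add: w_def algebra_simps)
      qed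
      have NwK: "N \<le> w * K"
      proof -
        have "(N + K - 1) div K * K + (N + K - 1) mod K = N + K - 1" by simp
        moreover have "(N + K - 1) mod K < K" using K1 by simp
        ultimately show ?thesis unfolding w_def by linarith
      qed
      define win where "win c = {t. c*K \<le> t \<and> t < (c+1)*K}" for c
      have Ecov: "E \<subseteq> (\<Union>c<w. E \<inter> win c)"
      proof
        fix t assume tE: "t \<in> E"
        then have tN: "t < N" by (simp add: E_def)
        have "t div K < w"
        proof (rule ccontr)
          assume "\<not> t div K < w"
          then have "w * K \<le> t div K * K" by simp
          also have "\<dots> \<le> t" by simp
          finally show False using tN NwK by simp
        qed
        moreover have "t \<in> win (t div K)"
        proof -
          have "t div K * K \<le> t" by simp
          moreover have "t < (t div K + 1) * K"
          proof -
            have e1: "t div K * K + t mod K = t" by simp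
            moreover have "t mod K < K" using K1 by simp
            moreover have "(t div K + 1) * K = t div K * K + K" by (simp add: algebra_simps)
            ultimately show ?thesis by linarith
          qed
          ultimately show ?thesis by (simp add: win_def)
        qed
        ultimately show "t \<in> (\<Union>c<w. E \<inter> win c)" using tE by blast
      qed
      obtain c where c: "c < w" "q \<le> card (E \<inter> win c)"
      proof (rule ccontr)
        assume "\<not> thesis"
        then have lt: "\<And>c. c < w \<Longrightarrow> card (E \<inter> win c) \<le> q - 1" using that by fastforce
        have "card E \<le> card (\<Union>c<w. E \<inter> win c)"
          by (rule card_mono[OF _ Ecov]) (simp add: fE)
        also have "\<dots> \<le> (\<Sum>c<w. card (E \<inter> win c))" by (rule card_UN_le) simp
        also have "\<dots> \<le> (\<Sum>c<w. q - 1)" by (rule sum_mono) (use lt in simp)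
        also have "\<dots> = w * (q - 1)" by simp
        finally have "card E \<le> w * (q - 1)" .
        then show False using cE K1 by (simp add: mult.commute)
      qed
      obtain X' where X': "X' \<subseteq> E \<inter> win c" "card X' = q" "finite X'"
        using obtain_subset_with_card_n[OF c(2)] by blast
      define Xs where "Xs = sorted_list_of_set X'"
      have lenX: "length Xs = q" using X' by (simp add: Xs_def)
      have sX: "sorted_wrt (<) Xs" by (simp add: Xs_def strict_sorted_list_of_set)
      have XsX: "Xs!i \<in> X'" if "i < q" for i
      proof -
        have "Xs!i \<in> set Xs" using that lenX by simp
        then show ?thesis using X'(3) by (simp add: Xs_def)
      qed
      have q1: "1 \<le> q" by (simp add: q_def)
      have XE: "Xs!i \<in> E" "Xs!i \<in> win c" if "i < q" for i using XsX[OF that] X'(1) by auto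
      have XN: "Xs!i < N" if "i < q" for i using XE[OF that] by (simp add: E_def)
      have XH: "H \<le> L!(Xs!i)" if "i < q" for i using XE[OF that] by (simp add: E_def)
      have XK: "Xs!(Suc i) \<le> Xs!i + K" if "Suc i < q" for i
      proof -
        have "Xs!(Suc i) \<in> win c" "Xs!i \<in> win c" using XE that by auto
        then show ?thesis by (simp add: win_def algebra_simps)
      qed
      have Xlast: "Xs!(q-1) < Xs!0 + K"
      proof -
        have "Xs!(q-1) \<in> win c" "Xs!0 \<in> win c" using XE q1 by auto
        then show ?thesis by (simp add: win_def algebra_simps)
      qed
      have dens: "\<exists>d. 1 \<le> d \<and> d \<le> H \<and> (t + d) mod N < N \<and> K \<le> L!((t + d) mod N)"
        if "t < N" for t
        using dH that unfolding dense_def G_def by blast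
      have cardG: "K + q \<le> card {t. t < N \<and> K \<le> L!t}"
      proof -
        have "card E \<le> card G" using EG fG by (simp add: card_mono)
        then show ?thesis using cE by (simp add: G_def)
      qed
      have qH: "2*N < q*H"
      proof -
        have e1: "(2*N div K)*K + 2*N mod K = 2*N" by (rule div_mult_mod_eq)
        moreover have "2*N mod K < K" using K1 by simp
        moreover have "q*K = (2*N div K)*K + K" by (simp add: q_def algebra_simps)
        ultimately have "2*N < q*K" by linarith
        also have "\<dots> \<le> q*H" using KH by simp
        finally show ?thesis .
      qed
      show ?thesis
        using build[OF lenL q1 lenX sX refl XN XH XK Xlast dens cardG qH] by blast
    qed
  qed
qed

lemma antip_rotate1:
  assumes "antip N ys" shows "antip N (rotate1 ys)"
proof (cases "N = 0")
  case True then show ?thesis using assms by (simp add: antip_def)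
next
  case False
  have len: "length ys = 2*N" using assms by (simp add: antip_def)
  have "rotate1 ys ! i \<noteq> rotate1 ys ! (i + N)" if i: "i < N" for i
  proof -
    have a: "rotate1 ys ! i = ys ! (Suc i)" using nth_rotate1[of i ys] len i by simp
    show ?thesis
    proof (cases "Suc i < N")
      case True
      have "rotate1 ys ! (i + N) = ys ! (Suc i + N)" using nth_rotate1[of "i+N" ys] len True by simp
      then show ?thesis using a assms True by (simp add: antip_def)
    next
      case False
      then have iN: "Suc i = N" using i by simp
      have m0: "Suc (i + N) mod (2*N) = 0"
      proof -
        have e2: "Suc (i + N) = 2*N" using iN by simp
        show ?thesis unfolding e2 by simp
      qed
      have "rotate1 ys ! (i + N) = ys ! 0" using nth_rotate1[of "i+N" ys] len iN m0 by simp
      then show ?thesis using a assms iN False by (simp add: antip_def)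
    qed
  qed
  then show ?thesis using len by (simp add: antip_def)
qed

lemma antip_rotate: "antip N ys \<Longrightarrow> antip N (rotate m ys)"
  by (induct m) (auto simp: antip_rotate1)

lemma antip_transfer:
  assumes "subseq ys (b @ a)" "antip N ys"
  shows "\<exists>ys'. subseq ys' (a @ b) \<and> antip N ys'"
proof -
  obtain y1 y2 where y: "ys = y1 @ y2" "subseq y1 b" "subseq y2 a"
    using assms(1) by (auto simp: subseq_append_iff)
  have "subseq (y2 @ y1) (a @ b)" using y by (simp add: list_emb_append_mono)
  moreover have "y2 @ y1 = rotate (length y1) ys" using y by (simp add: rotate_append)
  ultimately show ?thesis using antip_rotate[OF assms(2)] by metis
qed

lemma blk_emb: "list_all2 (\<le>) ms Ls \<Longrightarrow> subseq (concat (map blk ms)) (concat (map blk Ls))"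
proof (induct ms Ls rule: list_all2_induct)
  case Nil then show ?case by simp
next
  case (Cons m ms l Ls)
  have rl: "replicate l False = replicate m False @ replicate (l - m) False"
    using Cons(1) by (metis le_add_diff_inverse replicate_add)
  have "subseq (replicate m False) (replicate l False)"
    unfolding rl by (rule subseq_rev_drop_many) simp
  then have "subseq (blk m) (blk l)" by (simp add: blk_def subseq_append)
  then show ?case using Cons(3) by (simp add: list_emb_append_mono)
qed

lemma decomp: "\<exists>Ls r. xs = concat (map blk Ls) @ replicate r False"
proof (induct xs rule: rev_induct)
  case Nil then show ?case by (intro exI[of _ "[]"] exI[of _ 0]) simp
next
  case (snoc x xs)
  then obtain Ls r where e: "xs = concat (map blk Ls) @ replicate r False" by blast
  show ?case
  proof (cases x)
    case True
    then have "xs @ [x] = concat (map blk (Ls @ [r])) @ replicate 0 False" using e by (simp add: blk_def)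
    then show ?thesis by blast
  next
    case False
    then have "xs @ [x] = concat (map blk Ls) @ replicate (Suc r) False"
      using e by (simp add: replicate_append_same[symmetric])
    then show ?thesis by blast
  qed
qed

lemma filter_blk: "length (filter id (concat (map blk Ls))) = length Ls"
  "length (filter Not (concat (map blk Ls))) = sum_list Ls"
  by (induct Ls) (auto simp: blk_def)

definition R0 :: "nat \<Rightarrow> nat \<Rightarrow> nat" where
  "R0 N K = (2*N div K) * ((N+K-1) div K) + K + 2*N div K + 1"

lemma list_core:
  fixes \<sigma> :: "bool list" and N K :: nat
  assumes cT: "length (filter id \<sigma>) = N" and N1: "1 \<le> N" and K1: "1 \<le> K"
    and big: "4*N*(K-1) + N*N + 4*R0 N K*N < 4 * length (filter Not \<sigma>)"
  shows "\<exists>ys. subseq ys \<sigma> \<and> antip N ys"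
proof -
  obtain Ls r where e: "\<sigma> = concat (map blk Ls) @ replicate r False" using decomp by blast
  have lLs: "length Ls = N" using cT e filter_blk(1)[of Ls] by simp
  then obtain l Ls0 where Lc: "Ls = l # Ls0" using N1 by (cases Ls) auto
  define Ls' where "Ls' = (l + r) # Ls0"
  have rr: "replicate r False @ replicate l False = replicate (l + r) False"
    by (simp add: replicate_add[symmetric] add.commute)
  have e': "replicate r False @ concat (map blk Ls) = concat (map blk Ls')"
    using rr by (simp add: Lc Ls'_def blk_def)
  have lLs': "length Ls' = N" using lLs Lc by (simp add: Ls'_def)
  have sLs': "sum_list Ls' = length (filter Not \<sigma>)"
    using e filter_blk(2)[of Ls] Lc by (simp add: Ls'_def)
  obtain r0 ms where ms: "length ms = N" "list_all2 (\<le>) ms (rotate r0 Ls')"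
      "antip N (concat (map blk ms))"
    using core[OF lLs' N1 K1] big sLs' by (auto simp: R0_def)
  define j where "j = r0 mod N"
  have rot: "rotate r0 Ls' = drop j Ls' @ take j Ls'"
    using rotate_drop_take[of r0 Ls'] lLs' by (simp add: j_def)
  have "subseq (concat (map blk ms)) (concat (map blk (drop j Ls')) @ concat (map blk (take j Ls')))"
    using blk_emb[OF ms(2)] rot by simp
  then obtain ys1 where ys1: "subseq ys1 (concat (map blk (take j Ls')) @ concat (map blk (drop j Ls')))"
      "antip N ys1"
    using antip_transfer[OF _ ms(3)] by blast
  then have "subseq ys1 (concat (map blk Ls'))"
    by (metis append_take_drop_id concat_append map_append)
  then have "subseq ys1 (replicate r False @ concat (map blk Ls))" using e' by simp
  then obtain ys where "subseq ys (concat (map blk Ls) @ replicate r False)" "antip N ys"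
    using antip_transfer[OF _ ys1(2)] by blast
  then show ?thesis using e by blast
qed

lemma subseq_set: "subseq xs ys \<Longrightarrow> set xs \<subseteq> set ys"
  by (induct rule: list_emb.induct) auto

lemma subseq_sorted: "subseq xs ys \<Longrightarrow> sorted_wrt P ys \<Longrightarrow> sorted_wrt P xs"
proof (induct rule: list_emb.induct)
  case (list_emb_Cons2 x y xs ys)
  then show ?case using subseq_set[OF list_emb_Cons2(2)] by auto
qed auto

lemma subseq_map_lift: "subseq ys (map f xs) \<Longrightarrow> \<exists>zs. subseq zs xs \<and> ys = map f zs"
proof (induct xs arbitrary: ys)
  case Nil then show ?case by (intro exI[of _ "[]"]) (auto dest: list_emb_Nil2)
next
  case (Cons x xs)
  show ?case
  proof (cases ys)
    case Nil then show ?thesis by (intro exI[of _ "[]"]) simp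
  next
    case (Cons y ys')
    show ?thesis
    proof (cases "y = f x")
      case True
      then have "subseq ys' (map f xs)" using Cons.prems Cons
        by (simp add: subseq_Cons2_iff)
      then obtain zs where "subseq zs xs" "ys' = map f zs" using Cons.hyps by blast
      then show ?thesis using Cons True by (intro exI[of _ "x # zs"]) auto
    next
      case False
      then have "subseq ys (map f xs)" using Cons.prems Cons by (simp add: subseq_Cons2_iff)
      then obtain zs where "subseq zs xs" "ys = map f zs" using Cons.hyps by blast
      then show ?thesis by (intro exI[of _ zs]) auto
    qed
  qed
qed

lemma no_embed:
  fixes N n K :: nat
  assumes N1: "1 \<le> N" and K1: "1 \<le> K"
    and big: "4*N*(K-1) + N*N + 4*R0 N K*N < 4*n"
  shows "\<not> k_page_embeddable (Kbip_V N n) (Kbip_E N n) (N - 1)"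
proof
  define V where "V = Kbip_V N n"
  define E where "E = Kbip_E N n"
  assume "k_page_embeddable (Kbip_V N n) (Kbip_E N n) (N - 1)"
  then obtain spine page where emb: "is_book_embedding V E (N - 1) spine page"
    unfolding k_page_embeddable_def V_def E_def by blast
  have inj: "inj_on spine V" and pg: "\<And>e. e \<in> E \<Longrightarrow> page e < N - 1"
    and cross: "\<And>u v x y. {u, v} \<in> E \<Longrightarrow> {x, y} \<in> E \<Longrightarrow> page {u, v} = page {x, y}
         \<Longrightarrow> \<not> interleave spine u v x y"
    using emb unfolding is_book_embedding_def by auto
  have fV: "finite V" by (simp add: V_def Kbip_V_def)
  define ps where "ps = sorted_list_of_set (spine ` V)"
  define vs where "vs = map (the_inv_into V spine) ps"
  have setps: "set ps = spine ` V" using fV by (simp add: ps_def)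
  have sps: "sorted_wrt (<) ps" by (simp add: ps_def strict_sorted_list_of_set)
  have dps: "distinct ps" by (simp add: ps_def)
  have mvs: "map spine vs = ps"
    unfolding vs_def map_map
    by (rule map_idI) (use f_the_inv_into_f[OF inj] setps in auto)
  have setvs: "set vs = V" using the_inv_into_onto[OF inj] setps by (simp add: vs_def)
  have dvs: "distinct vs" using dps mvs by (metis distinct_map)
  have svs: "sorted_wrt (\<lambda>u v. spine u < spine v) vs" using sps mvs sorted_wrt_map by metis
  define \<sigma> where "\<sigma> = map isl vs"
  have cT: "length (filter id \<sigma>) = N"
  proof -
    have "length (filter id \<sigma>) = length (filter isl vs)" by (simp add: \<sigma>_def filter_map comp_def)
    also have "\<dots> = card ({x. isl x} \<inter> V)" using distinct_length_filter[OF dvs] setvs by simp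
    also have "{x. isl x} \<inter> V = Inl ` {..<N}" by (auto simp: V_def Kbip_V_def)
    also have "card \<dots> = N" by (simp add: card_image)
    finally show ?thesis .
  qed
  have cF: "length (filter Not \<sigma>) = n"
  proof -
    have "length (filter Not \<sigma>) = length (filter (\<lambda>x. \<not> isl x) vs)" by (simp add: \<sigma>_def filter_map comp_def)
    also have "\<dots> = card ({x. \<not> isl x} \<inter> V)" using distinct_length_filter[OF dvs] setvs by simp
    also have "{x. \<not> isl x} \<inter> V = Inr ` {..<n}" by (auto simp: V_def Kbip_V_def)
    also have "card \<dots> = n" by (simp add: card_image)
    finally show ?thesis .
  qed
  obtain ys where ys: "subseq ys \<sigma>" "antip N ys"
    using list_core[OF cT N1 K1] big cF by auto
  obtain zs where zs: "subseq zs vs" "ys = map isl zs"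
    using subseq_map_lift[of ys isl vs] ys(1) by (auto simp: \<sigma>_def)
  have lzs: "length zs = 2*N" using ys(2) zs(2) by (simp add: antip_def)
  have szs: "sorted_wrt (\<lambda>u v. spine u < spine v) zs" using subseq_sorted[OF zs(1) svs] .
  have zV: "zs!i \<in> V" if "i < 2*N" for i
  proof -
    have "zs!i \<in> set zs" using lzs that by simp
    then show ?thesis using subseq_set[OF zs(1)] setvs by blast
  qed
  have diff: "isl (zs!i) \<noteq> isl (zs!(i+N))" if "i < N" for i
    using ys(2) zs(2) that lzs by (simp add: antip_def)
  have edge: "{u, v} \<in> E" if uv: "u \<in> V" "v \<in> V" "isl u \<noteq> isl v" for u v
  proof (cases "isl u")
    case True
    then obtain a b where "u = Inl a" "a < N" "v = Inr b" "b < n" using uv True by (auto simp: V_def Kbip_V_def)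
    then show ?thesis by (auto simp: E_def Kbip_E_def)
  next
    case False
    then obtain a b where "v = Inl a" "a < N" "u = Inr b" "b < n" using uv False by (auto simp: V_def Kbip_V_def)
    then show ?thesis by (auto simp: E_def Kbip_E_def insert_commute)
  qed
  define e where "e i = {zs!i, zs!(i+N)}" for i
  have eE: "e i \<in> E" if "i < N" for i
    unfolding e_def using edge zV diff that by simp
  define pgf where "pgf i = page (e i)" for i
  have "\<not> inj_on pgf {..<N}"
  proof
    assume "inj_on pgf {..<N}"
    then have "card (pgf ` {..<N}) = N" by (simp add: card_image)
    moreover have "pgf ` {..<N} \<subseteq> {..<N-1}" using pg eE by (auto simp: pgf_def)
    ultimately have "N \<le> N - 1" by (metis card_lessThan card_mono finite_lessThan)
    then show False using N1 by simp
  qed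
  then obtain i j where ij: "i < N" "j < N" "i \<noteq> j" "pgf i = pgf j"
    unfolding inj_on_def by auto
  have "\<exists>i j. i < j \<and> j < N \<and> pgf i = pgf j"
  proof (cases "i < j")
    case True then show ?thesis using ij by blast
  next
    case False then show ?thesis using ij by (intro exI[of _ j] exI[of _ i]) auto
  qed
  then obtain a b where ab: "a < b" "b < N" "pgf a = pgf b" by blast
  have "interleave spine (zs!a) (zs!(a+N)) (zs!b) (zs!(b+N))"
    unfolding interleave_def
    using sorted_wrt_nth_less[OF szs, of a b] sorted_wrt_nth_less[OF szs, of b "a+N"]
      sorted_wrt_nth_less[OF szs, of "a+N" "b+N"] ab lzs by simp
  moreover have "{zs!a, zs!(a+N)} \<in> E" "{zs!b, zs!(b+N)} \<in> E" using eE ab by (auto simp: e_def)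
  moreover have "page {zs!a, zs!(a+N)} = page {zs!b, zs!(b+N)}" using ab by (simp add: pgf_def e_def)
  ultimately show False using cross by blast
qed

lemma real_div_le: "0 < b \<Longrightarrow> real (a div b) \<le> real a / real b"
proof -
  assume b: "0 < b"
  have "a div b * b \<le> a" by (rule div_times_less_eq_dividend)
  then have "real (a div b) * real b \<le> real a" by (metis of_nat_le_iff of_nat_mult)
  then show ?thesis using b by (simp add: le_divide_eq)
qed

lemma final_arith:
  fixes k :: nat
  assumes k1: "1 \<le> k"
  defines "n \<equiv> nat \<lceil>(real k)\<^sup>2 / 4 + 500 * real k powr (7 / 4)\<rceil>"
  defines "K \<equiv> (nat \<lceil>real k powr (1/4)\<rceil>)^3"
  shows "1 \<le> K \<and> 4*(k+1)*(K-1) + (k+1)*(k+1) + 4*R0 (k+1) K*(k+1) < 4*n"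
proof -
  define r where "r = real k powr (1/4)"
  have k0: "0 < real k" using k1 by simp
  have r1: "1 \<le> r" unfolding r_def using k1 by (intro ge_one_powr_ge_zero) auto
  have r0: "0 < r" using r1 by simp
  have rk: "r^4 = real k"
  proof -
    have "r^4 = r powr (real 4)" using powr_realpow[OF r0, of 4] by simp
    also have "\<dots> = real k" by (simp add: r_def powr_powr)
    finally show ?thesis .
  qed
  have r7: "real k powr (7/4) = r^7"
  proof -
    have "r^7 = r powr (real 7)" using powr_realpow[OF r0, of 7] by simp
    also have "\<dots> = real k powr (7/4)" by (simp add: r_def powr_powr)
    finally show ?thesis by simp
  qed
  define s where "s = nat \<lceil>r\<rceil>"
  have s_ge: "r \<le> real s" unfolding s_def by (rule real_nat_ceiling_ge)
  have s_le: "real s \<le> 2*r"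
  proof -
    have "real s = real_of_int \<lceil>r\<rceil>" using r0 by (simp add: s_def)
    also have "\<dots> \<le> r + 1" by (rule of_int_ceiling_le_add_one)
    finally show ?thesis using r1 by simp
  qed
  have Ks: "K = s^3" by (simp add: K_def s_def r_def)
  have rK: "r^3 \<le> real K" using s_ge r0 by (simp add: Ks power_mono)
  have Kr: "real K \<le> 8*r^3"
  proof -
    have "real s ^ 3 \<le> (2*r)^3" by (rule power_mono) (use s_le s_ge r0 in auto)
    then show ?thesis by (simp add: Ks power_mult_distrib)
  qed
  have r3: "1 \<le> r^3" using r1 by (simp add: one_le_power)
  have K1: "1 \<le> K" using rK r3 by linarith
  have Kpos: "0 < K" using K1 by simp
  define N where "N = k + 1"
  have rN: "real N = r^4 + 1" by (simp add: N_def rk)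
  have NK: "real N / real K \<le> r + 1"
  proof -
    have "real N / real K \<le> (r^4 + 1) / r^3"
      using rK r3 rN r0 by (intro frac_le) auto
    also have "\<dots> = r + 1 / r^3" using r0 by (simp add: field_simps power_eq_if)
    also have "\<dots> \<le> r + 1" using r3 r0 by (simp add: divide_le_eq)
    finally show ?thesis .
  qed
  have d1: "real (2*N div K) \<le> 4*r"
  proof -
    have "real (2*N div K) \<le> real (2*N) / real K" by (rule real_div_le[OF Kpos])
    also have "\<dots> = 2 * (real N / real K)" by simp
    also have "\<dots> \<le> 4*r" using NK r1 by simp
    finally show ?thesis .
  qed
  have d2: "real ((N+K-1) div K) \<le> 3*r"
  proof -
    have "real ((N+K-1) div K) \<le> real (N+K-1) / real K" by (rule real_div_le[OF Kpos])
    also have "\<dots> \<le> real (N + K) / real K" by (intro divide_right_mono) auto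
    also have "\<dots> = real N / real K + 1" using Kpos by (simp add: field_simps)
    also have "\<dots> \<le> 3*r" using NK r1 by simp
    finally show ?thesis .
  qed
  have R0b: "real (R0 N K) \<le> 25*r^3"
  proof -
    have "real (R0 N K) = real (2*N div K) * real ((N+K-1) div K) + real K + real (2*N div K) + 1"
      by (simp add: R0_def)
    also have "\<dots> \<le> (4*r)*(3*r) + 8*r^3 + 4*r + 1"
      using d1 d2 Kr by (intro add_mono mult_mono) auto
    also have "\<dots> \<le> 25*r^3"
    proof -
      have "r^2 \<le> r^3" using r1 by (intro power_increasing) auto
      moreover have "r \<le> r^3" using r1 power_increasing[of 1 3 r] by simp
      ultimately show ?thesis using r3 by (simp add: power2_eq_square)
    qed
    finally show ?thesis .
  qed
  have LHS: "real (4*N*(K-1) + N*N + 4*R0 N K*N) \<le> 4*(r^4+1)*(8*r^3) + (r^4+1)*(r^4+1) + 4*(25*r^3)*(r^4+1)"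
  proof -
    have "real (4*N*(K-1) + N*N + 4*R0 N K*N) = 4*real N*(real K - 1) + real N*real N + 4*real (R0 N K)*real N"
      using K1 by (simp add: of_nat_diff)
    also have "\<dots> \<le> 4*(r^4+1)*(8*r^3) + (r^4+1)*(r^4+1) + 4*(25*r^3)*(r^4+1)"
      unfolding rN using Kr R0b r0 K1 by (intro add_mono mult_mono) auto
    finally show ?thesis .
  qed
  have poly: "4*(r^4+1)*(8*r^3) + (r^4+1)*(r^4+1) + 4*(25*r^3)*(r^4+1) < r^8 + 2000*r^7"
  proof -
    have p1: "r^4 * r^4 = r^8" "r^4*r^3 = r^7" "r^3 * r^4 = r^7"
      by (simp_all add: power_add[symmetric])
    have e: "4*(r^4+1)*(8*r^3) + (r^4+1)*(r^4+1) + 4*(25*r^3)*(r^4+1)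
          = r^8 + 132*r^7 + 2*r^4 + 132*r^3 + 1"
      by (simp add: ring_distribs p1 mult.assoc)
    have a: "r^4 \<le> r^7" "r^3 \<le> r^7" "1 \<le> r^7" using r1 by (auto intro: power_increasing one_le_power)
    show ?thesis using e a by linarith
  qed
  have RHS: "r^8 + 2000*r^7 \<le> 4 * real n"
  proof -
    have "(real k)^2 / 4 + 500 * real k powr (7/4) \<le> real n" unfolding n_def by (rule real_nat_ceiling_ge)
    moreover have "(real k)^2 = r^8"
    proof -
      have "(r^4)^2 = r^8" by (simp add: power_mult[symmetric])
      then show ?thesis using rk by simp
    qed
    ultimately show ?thesis using r7 by simp
  qed
  have "real (4*N*(K-1) + N*N + 4*R0 N K*N) < real (4*n)" using LHS poly RHS by simp
  then have "4*N*(K-1) + N*N + 4*R0 N K*N < 4*n" by (simp only: of_nat_less_iff)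
  then show ?thesis using K1 by (simp add: N_def)
qed

theorem proposition15:
  fixes k :: nat
  assumes "k \<ge> 1"
  shows "\<not> k_page_embeddable
            (Kbip_V (k + 1) (nat \<lceil>(real k)\<^sup>2 / 4 + 500 * real k powr (7 / 4)\<rceil>))
            (Kbip_E (k + 1) (nat \<lceil>(real k)\<^sup>2 / 4 + 500 * real k powr (7 / 4)\<rceil>)) k"
proof -
  define K where "K = (nat \<lceil>real k powr (1/4)\<rceil>)^3"
  define n where "n = nat \<lceil>(real k)\<^sup>2 / 4 + 500 * real k powr (7 / 4)\<rceil>"
  have fa: "1 \<le> K \<and> 4*(k+1)*(K-1) + (k+1)*(k+1) + 4*R0 (k+1) K*(k+1) < 4*n"
    using final_arith[OF assms] by (simp add: K_def n_def)
  have "\<not> k_page_embeddable (Kbip_V (k+1) n) (Kbip_E (k+1) n) (k + 1 - 1)"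
    by (rule no_embed) (use fa in auto)
  then show ?thesis by (simp add: n_def)
qed

end
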